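(* Let $p$ be a stochastic choice function on $X$, $M\in\mathcal N$ and $i,j\in M$ distinct. If $p(\cdot,M)$ is not bounded in a cycle over the pair $(i,j)$, then every MSC $\langle Q,\nu\rangle$ rationalizing $p$ satisfies $q_{ij}(M)=0$.
   Context: $X$ is a finite set of alternatives; a menu is a nonempty subset of $X$, and $\mathcal N$ denotes the set of all menus. A stochastic choice function is a map $p:X\times\mathcal N\to[0,1]$ with $\sum_{i\in M}p(i,M)=1$ and $p(i,M)=0$ for $i\notin M$; $p(\cdot,M)$ denotes the row vector $(p(i,M))_{i\in M}$. For $M\in\mathcal N$ and $i,j\in M$ let $\delta_{ij}(M)=p(i,M)\,p(j,\{i,j\})-p(i,\{i,j\})\,p(j,M)$. An MSC (Markov stochastic choice model) $\langle Q,\nu\rangle$ consists of, for every menu $M$, a matrix $Q(M)=(q_{ij}(M))_{i,j\in M}$ with nonnegative entries and a probability distribution $\nu_M$ on $M$, such that for all $M\in\mathcal N$ and distinct $i,j\in M$: (A1) $q_{ii}(M)=1-\sum_{k\neq i}q_{ik}(M)>0$; (A2) if $q_{ij}(\{i,j\})=0$ then $q_{ji}(\{i,j\})>0$; (A3) $q_{ij}(\{i,j\})\,q_{ji}(M)=q_{ji}(\{i,j\})\,q_{ij}(M)$. For a right stochastic matrix $Q$ on $M$ and a distribution $\nu$ on $M$ define $\rho(\nu,Q)=\lim_{\alpha\to0^+}\sum_{t\ge0}\alpha(1-\alpha)^t\nu Q^t$ (the limit exists and satisfies $\rho(\nu,Q)(I-Q)=0$). $p$ is rationalized by the MSC $\langle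 Q,\nu\rangle$ if $p(\cdot,M)=\rho(\nu_M,Q(M))$ for every $M\in\mathcal N$. A cycle on a set $M'=\{i_1,\dots,i_n\}$ (distinct elements in some order) is the set of ordered pairs $\{(i_1,i_2),\dots,(i_{n-1},i_n),(i_n,i_1)\}$. $p(\cdot,M)$ is bounded in a cycle over the pair $(i,j)$ if either $\delta_{ij}(M)=0$, or there exist $M'\subseteq M$ and a cycle on $M'$ containing $(i,j)$ such that all $\delta_{kl}(M)$, $(k,l)$ in the cycle, are strictly positive, or all are strictly negative. *)

theory Defs
  imports Complex_Main
begin

definition menus :: "'a set \<Rightarrow> 'a set set" where
  "menus X = {M. M \<subseteq> X \<and> M \<noteq> {}}"

text \<open>Stochastic choice function p(i,M) on X (only values with i in X and M a menu matter).\<close>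
definition stoch_choice :: "'a set \<Rightarrow> ('a \<Rightarrow> 'a set \<Rightarrow> real) \<Rightarrow> bool" where
  "stoch_choice X p \<longleftrightarrow>
     (\<forall>M\<in>menus X. (\<forall>i\<in>X. 0 \<le> p i M \<and> p i M \<le> 1)
                 \<and> (\<Sum>i\<in>M. p i M) = 1
                 \<and> (\<forall>i\<in>X. i \<notin> M \<longrightarrow> p i M = 0))"

definition delta :: "('a \<Rightarrow> 'a set \<Rightarrow> real) \<Rightarrow> 'a set \<Rightarrow> 'a \<Rightarrow> 'a \<Rightarrow> real" where
  "delta p M i j = p i M * p j {i, j} - p i {i, j} * p j M"

fun qpow :: "'a set \<Rightarrow> ('a \<Rightarrow> 'a \<Rightarrow> real) \<Rightarrow> nat \<Rightarrow> 'a \<Rightarrow> 'a \<Rightarrow> real" where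
  "qpow M q 0 i j = (if i = j then 1 else 0)"
| "qpow M q (Suc t) i j = (\<Sum>k\<in>M. qpow M q t i k * q k j)"

text \<open>Markov stochastic choice model: Q M i j = q_ij(M), nu M i = nu_M(i).\<close>
definition MSC :: "'a set \<Rightarrow> ('a set \<Rightarrow> 'a \<Rightarrow> 'a \<Rightarrow> real) \<Rightarrow> ('a set \<Rightarrow> 'a \<Rightarrow> real) \<Rightarrow> bool" where
  "MSC X Q \<nu> \<longleftrightarrow>
     (\<forall>M\<in>menus X.
        (\<forall>i\<in>M. \<forall>j\<in>M. 0 \<le> Q M i j)
      \<and> (\<forall>i\<in>M. 0 \<le> \<nu> M i) \<and> (\<Sum>i\<in>M. \<nu> M i) = 1
      \<and> (\<forall>i\<in>M. Q M i i = 1 - (\<Sum>k\<in>M - {i}. Q M i k) \<and> Q M i i > 0)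
      \<and> (\<forall>i\<in>M. \<forall>j\<in>M. i \<noteq> j \<longrightarrow>
            (Q {i, j} i j = 0 \<longrightarrow> Q {i, j} j i > 0)
          \<and> Q {i, j} i j * Q M j i = Q {i, j} j i * Q M i j))"

text \<open>rho(nu_M, Q(M)) evaluated at j: the Abel limit of the distributions nu Q^t.\<close>
definition rho_tendsto :: "'a set \<Rightarrow> ('a \<Rightarrow> real) \<Rightarrow> ('a \<Rightarrow> 'a \<Rightarrow> real) \<Rightarrow> 'a \<Rightarrow> real \<Rightarrow> bool" where
  "rho_tendsto M \<nu> q j r \<longleftrightarrow>
     ((\<lambda>\<alpha>. \<Sum>t. \<alpha> * (1 - \<alpha>) ^ t * (\<Sum>i\<in>M. \<nu> i * qpow M q t i j)) \<longlongrightarrow> r) (at_right 0)"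

definition rationalizes :: "'a set \<Rightarrow> ('a \<Rightarrow> 'a set \<Rightarrow> real) \<Rightarrow> ('a set \<Rightarrow> 'a \<Rightarrow> 'a \<Rightarrow> real) \<Rightarrow> ('a set \<Rightarrow> 'a \<Rightarrow> real) \<Rightarrow> bool" where
  "rationalizes X p Q \<nu> \<longleftrightarrow>
     (\<forall>M\<in>menus X. \<forall>j\<in>M. rho_tendsto M (\<nu> M) (Q M) j (p j M))"

definition cycle_pairs :: "'a list \<Rightarrow> ('a \<times> 'a) set" where
  "cycle_pairs xs = {(xs ! k, xs ! ((k + 1) mod length xs)) | k. k < length xs}"

definition bounded_in_cycle :: "('a \<Rightarrow> 'a set \<Rightarrow> real) \<Rightarrow> 'a set \<Rightarrow> 'a \<Rightarrow> 'a \<Rightarrow> bool" where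
  "bounded_in_cycle p M i j \<longleftrightarrow>
     delta p M i j = 0 \<or>
     (\<exists>xs. xs \<noteq> [] \<and> distinct xs \<and> set xs \<subseteq> M \<and> (i, j) \<in> cycle_pairs xs \<and>
        ((\<forall>(k, l)\<in>cycle_pairs xs. delta p M k l > 0) \<or>
         (\<forall>(k, l)\<in>cycle_pairs xs. delta p M k l < 0)))"

end

theory Submission imports Defs begin

lemma qpow_nonneg:
  assumes "\<forall>k\<in>M. \<forall>l\<in>M. 0 \<le> Q k l" "j \<in> M"
  shows "0 \<le> qpow M Q t i j"
  using assms(2)
proof (induction t arbitrary: j)
  case 0 then show ?case by simp
next
  case (Suc t) then show ?case using assms(1) by (auto intro!: sum_nonneg)
qed

lemma qpow_rowsum:
  assumes "finite M" "\<forall>k\<in>M. (\<Sum>l\<in>M. Q k l) = 1" "i \<in> M"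
  shows "(\<Sum>j\<in>M. qpow M Q t i j) = 1"
proof (induction t)
  case 0 then show ?case using assms by simp
next
  case (Suc t)
  have "(\<Sum>j\<in>M. qpow M Q (Suc t) i j) = (\<Sum>k\<in>M. qpow M Q t i k * (\<Sum>j\<in>M. Q k j))"
    by (simp add: sum_distrib_left) (rule sum.swap)
  also have "\<dots> = (\<Sum>k\<in>M. qpow M Q t i k)" using assms(2) by simp
  finally show ?case using Suc by simp
qed

lemma stationary:
  assumes fin: "finite M"
    and nn: "\<forall>k\<in>M. \<forall>l\<in>M. 0 \<le> Q k l"
    and rs: "\<forall>k\<in>M. (\<Sum>l\<in>M. Q k l) = 1"
    and nun: "\<forall>i\<in>M. 0 \<le> \<nu> i" and nus: "(\<Sum>i\<in>M. \<nu> i) = 1"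
    and rt: "\<forall>j\<in>M. rho_tendsto M \<nu> Q j (r j)"
    and jM: "j \<in> M"
  shows "(\<Sum>k\<in>M. r k * Q k j) = r j"
proof -
  define w where "w t j = (\<Sum>i\<in>M. \<nu> i * qpow M Q t i j)" for t j
  have w0: "w 0 j = \<nu> j" if "j \<in> M" for j
    using that fin by (simp add: w_def if_distrib cong: if_cong)
  have wS: "w (Suc t) j = (\<Sum>k\<in>M. w t k * Q k j)" for t j
    by (simp add: w_def sum_distrib_left sum_distrib_right mult.assoc) (rule sum.swap)
  have wnn: "0 \<le> w t j" if "j \<in> M" for t j
    unfolding w_def using nun qpow_nonneg[OF nn that] by (auto intro!: sum_nonneg)
  have wsum: "(\<Sum>j\<in>M. w t j) = 1" for t
  proof -
    have "(\<Sum>j\<in>M. w t j) = (\<Sum>i\<in>M. \<nu> i * (\<Sum>j\<in>M. qpow M Q t i j))"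
      by (simp add: w_def sum_distrib_left) (rule sum.swap)
    also have "\<dots> = (\<Sum>i\<in>M. \<nu> i)" using qpow_rowsum[OF fin rs] by simp
    finally show ?thesis using nus by simp
  qed
  have wle: "w t j \<le> 1" if "j \<in> M" for t j
    using member_le_sum[of j M "w t", OF that] wnn fin wsum by auto
  define S where "S a j = (\<Sum>t. a * (1 - a) ^ t * w t j)" for a j
  have summ: "summable (\<lambda>t. a * (1 - a) ^ t * w t j)" if "0 < a" "a < 1" "j \<in> M" for a j
  proof (rule summable_comparison_test[where g = "\<lambda>t. a * (1 - a) ^ t"])
    show "\<exists>N. \<forall>n\<ge>N. norm (a * (1 - a) ^ n * w n j) \<le> a * (1 - a) ^ n"
      using that wnn[OF that(3)] wle[OF that(3)]
      by (auto simp: abs_mult intro!: mult_left_le)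
    show "summable (\<lambda>t. a * (1 - a) ^ t)"
      using that by (intro summable_mult summable_geometric) auto
  qed
  have key: "(1 - a) * (\<Sum>k\<in>M. S a k * Q k j) = S a j - a * \<nu> j" if "0 < a" "a < 1" for a
  proof -
    have s1: "(\<lambda>t. a * (1 - a) ^ t * w t j) sums S a j"
      unfolding S_def using summ[OF that jM] by (simp add: summable_sums)
    have s2: "(\<lambda>t. (1 - a) * (\<Sum>k\<in>M. (a * (1 - a) ^ t * w t k) * Q k j))
              sums ((1 - a) * (\<Sum>k\<in>M. S a k * Q k j))"
      unfolding S_def
      by (intro sums_mult sums_sum sums_mult2 summable_sums summ that) 
    have "(\<lambda>t. (1 - a) * (\<Sum>k\<in>M. (a * (1 - a) ^ t * w t k) * Q k j))
          = (\<lambda>t. a * (1 - a) ^ Suc t * w (Suc t) j)"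
      by (simp add: wS sum_distrib_left mult_ac)
    with s2 have "(\<lambda>t. a * (1 - a) ^ t * w t j) sums ((1 - a) * (\<Sum>k\<in>M. S a k * Q k j) + a * w 0 j)"
      using sums_Suc_iff[of "\<lambda>t. a * (1 - a) ^ t * w t j"] by simp
    with s1 have "S a j = (1 - a) * (\<Sum>k\<in>M. S a k * Q k j) + a * w 0 j"
      using sums_unique2 by blast
    then show ?thesis using w0[OF jM] by simp
  qed
  have lim: "((\<lambda>a. S a k) \<longlongrightarrow> r k) (at_right 0)" if "k \<in> M" for k
    using rt that by (simp add: rho_tendsto_def S_def w_def)
  have L1: "((\<lambda>a. (1 - a) * (\<Sum>k\<in>M. S a k * Q k j)) \<longlongrightarrow> (1 - 0) * (\<Sum>k\<in>M. r k * Q k j)) (at_right 0)"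
    by (intro tendsto_mult tendsto_diff tendsto_const tendsto_ident_at tendsto_sum lim) auto
  have L2: "((\<lambda>a. S a j - a * \<nu> j) \<longlongrightarrow> r j - 0 * \<nu> j) (at_right 0)"
    by (intro tendsto_mult tendsto_diff tendsto_const tendsto_ident_at lim jM)
  have ev: "eventually (\<lambda>a. (1 - a) * (\<Sum>k\<in>M. S a k * Q k j) = S a j - a * \<nu> j) (at_right (0::real))"
    unfolding eventually_at_right[of 0 "1::real", OF zero_less_one] using key by (intro exI[of _ 1]) auto
  have "((\<lambda>a. S a j - a * \<nu> j) \<longlongrightarrow> (1 - 0) * (\<Sum>k\<in>M. r k * Q k j)) (at_right 0)"
    using tendsto_cong[OF ev] L1 by simp
  from tendsto_unique[OF trivial_limit_at_right_real this L2] show ?thesis by simp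
qed

lemma alg:
  fixes a b x y rk rl Pk Pl :: real
  assumes "a*y = b*x" "rk*a = rl*b" "rk + rl = 1" "0 < a+b"
  shows "Pk*x - Pl*y = (x+y)*(Pk*rl - rk*Pl)"
proof -
  have "rl*(a+b) = rl*a + rk*a" using assms(2) by (simp add: algebra_simps)
  also have "\<dots> = (rk+rl)*a" by (simp add: algebra_simps)
  finally have e1: "rl*(a+b) = a" using assms(3) by simp
  have "rk*(a+b) = rl*b + rk*b" using assms(2) by (simp add: algebra_simps)
  also have "\<dots> = (rk+rl)*b" by (simp add: algebra_simps)
  finally have e2: "rk*(a+b) = b" using assms(3) by simp
  have "(a+b)*((x+y)*(Pk*rl - rk*Pl)) = (x+y)*(Pk*(rl*(a+b)) - (rk*(a+b))*Pl)"
    by (simp add: algebra_simps)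
  also have "\<dots> = (x+y)*(Pk*a - b*Pl)" using e1 e2 by simp
  also have "\<dots> = Pk*(x*a + y*a) - Pl*(x*b+y*b)" by (simp add: algebra_simps)
  also have "\<dots> = Pk*(x*a + x*b) - Pl*(y*a+y*b)" using assms(1) by (simp add: algebra_simps)
  also have "\<dots> = (a+b)*(Pk*x - Pl*y)" by (simp add: algebra_simps)
  finally show ?thesis using assms(4) by simp
qed

definition epath :: "('a \<times> 'a) set \<Rightarrow> 'a list \<Rightarrow> bool" where
  "epath E xs \<longleftrightarrow> xs \<noteq> [] \<and> distinct xs \<and> (\<forall>n. Suc n < length xs \<longrightarrow> (xs!n, xs!Suc n) \<in> E)"

lemma epath_extend:
  assumes "epath E xs" "(last xs, l) \<in> E"
  shows "\<exists>ys. epath E ys \<and> hd ys = hd xs \<and> last ys = l \<and> set ys \<subseteq> insert l (set xs)"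
proof (cases "l \<in> set xs")
  case False
  have "epath E (xs @ [l])"
    unfolding epath_def
  proof (intro conjI allI impI)
    show "distinct (xs @ [l])" using assms(1) False by (simp add: epath_def)
  next
    fix n assume n: "Suc n < length (xs @ [l])"
    show "((xs @ [l]) ! n, (xs @ [l]) ! Suc n) \<in> E"
    proof (cases "Suc n < length xs")
      case True then show ?thesis using assms(1) by (simp add: epath_def nth_append)
    next
      case False
      with n have "n = length xs - 1" "Suc n = length xs" by auto
      then show ?thesis using assms by (simp add: epath_def nth_append last_conv_nth)
    qed
  qed simp
  moreover have "xs \<noteq> []" using assms(1) by (simp add: epath_def)
  ultimately show ?thesis by (intro exI[of _ "xs @ [l]"]) auto
next
  case True
  then obtain m where m: "m < length xs" "xs ! m = l" by (auto simp: in_set_conv_nth)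
  have "epath E (take (Suc m) xs)" using assms(1) m by (auto simp: epath_def)
  moreover have "last (take (Suc m) xs) = l" using m by (simp add: take_Suc_conv_app_nth)
  moreover have "hd (take (Suc m) xs) = hd xs" using m assms(1) by (simp add: epath_def hd_conv_nth)
  moreover have "set (take (Suc m) xs) \<subseteq> insert l (set xs)" by (auto dest: in_set_takeD)
  ultimately show ?thesis by blast
qed


theorem proposition3:
  fixes X :: "'a set" and p :: "'a \<Rightarrow> 'a set \<Rightarrow> real" and M :: "'a set" and i j :: 'a
  assumes "finite X"
    and "stoch_choice X p"
    and "M \<in> menus X"
    and "i \<in> M" and "j \<in> M" and "i \<noteq> j"
    and "\<not> bounded_in_cycle p M i j"
  shows "\<forall>Q \<nu>. MSC X Q \<nu> \<and> rationalizes X p Q \<nu> \<longrightarrow> Q M i j = 0"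
proof (intro allI impI)
  fix Q \<nu> assume H: "MSC X Q \<nu> \<and> rationalizes X p Q \<nu>"
  have msc: "MSC X Q \<nu>" and rat: "rationalizes X p Q \<nu>" using H by auto
  have MX: "M \<subseteq> X" using assms(3) by (simp add: menus_def)
  have finM: "finite M" using MX assms(1) finite_subset by blast
  have finN: "finite N" if "N \<in> menus X" for N
    using that assms(1) finite_subset by (auto simp: menus_def)
  have nn: "\<forall>k\<in>N. \<forall>l\<in>N. 0 \<le> Q N k l" if "N \<in> menus X" for N
    using msc that by (simp add: MSC_def)
  have rs: "\<forall>k\<in>N. (\<Sum>l\<in>N. Q N k l) = 1" if "N \<in> menus X" for N
  proof
    fix k assume k: "k \<in> N"
    have "Q N k k = 1 - (\<Sum>l\<in>N - {k}. Q N k l)" using msc that k by (simp add: MSC_def)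
    moreover have "(\<Sum>l\<in>N. Q N k l) = Q N k k + (\<Sum>l\<in>N - {k}. Q N k l)"
      using sum.remove[OF finN[OF that] k] .
    ultimately show "(\<Sum>l\<in>N. Q N k l) = 1" by simp
  qed
  have stat: "(\<Sum>k\<in>N. p k N * Q N k l) = p l N" if "N \<in> menus X" "l \<in> N" for N l
  proof (rule stationary[OF finN[OF that(1)] nn[OF that(1)] rs[OF that(1)] _ _ _ that(2)])
    show "\<forall>i\<in>N. 0 \<le> \<nu> N i" "sum (\<nu> N) N = 1" using msc that(1) by (simp_all add: MSC_def)
    show "\<forall>j\<in>N. rho_tendsto N (\<nu> N) (Q N) j (p j N)" using rat that(1) by (simp add: rationalizes_def)
  qed
  define P where "P k = p k M" for k
  have flow: "P k * Q M k l - P l * Q M l k = (Q M k l + Q M l k) * delta p M k l"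
    if k: "k \<in> M" and l: "l \<in> M" for k l
  proof (cases "k = l")
    case True then show ?thesis by (simp add: delta_def)
  next
    case False
    define N where "N = {k, l}"
    have N: "N \<in> menus X" using k l MX by (auto simp: menus_def N_def)
    define a where "a = Q N k l"
    define b where "b = Q N l k"
    have ab: "0 \<le> a" "0 \<le> b" using nn[OF N] by (auto simp: a_def b_def N_def)
    have A23: "(Q {k, l} k l = 0 \<longrightarrow> Q {k, l} l k > 0) \<and> Q {k, l} k l * Q M l k = Q {k, l} l k * Q M k l"
      using msc assms(3) k l False unfolding MSC_def by blast
    have apb: "0 < a + b" using A23 ab by (cases "a = 0") (auto simp: a_def b_def N_def)
    have e3: "a * Q M l k = b * Q M k l" using A23 by (simp add: a_def b_def N_def)
    have st: "p k N * a + p l N * Q N l l = p l N"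
      using stat[OF N, of l] False by (simp add: N_def a_def)
    have "(\<Sum>m\<in>N. Q N l m) = 1" using rs[OF N] by (simp add: N_def)
    then have "Q N l k + Q N l l = 1" using False by (simp add: N_def)
    then have "Q N l l = 1 - b" by (simp add: b_def)
    with st have e2: "p k N * a = p l N * b" by (simp add: algebra_simps)
    have "(\<Sum>m\<in>N. p m N) = 1" using assms(2) N by (simp add: stoch_choice_def)
    then have e1: "p k N + p l N = 1" using False by (simp add: N_def)
    have "P k * Q M k l - P l * Q M l k = (Q M k l + Q M l k) * (P k * p l N - p k N * P l)"
      by (rule alg[OF e3 e2 e1 apb])
    then show ?thesis by (simp add: delta_def P_def N_def)
  qed
  have cons: "(\<Sum>l\<in>M. P k * Q M k l - P l * Q M l k) = 0" if k: "k \<in> M" for k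
  proof -
    have "(\<Sum>l\<in>M. P k * Q M k l) = P k" using rs[OF assms(3)] k by (simp add: sum_distrib_left[symmetric])
    moreover have "(\<Sum>l\<in>M. P l * Q M l k) = P k" using stat[OF assms(3) k] by (simp add: P_def)
    ultimately show ?thesis by (simp add: sum_subtractf)
  qed
  show "Q M i j = 0"
  proof (rule ccontr)
    assume Qne: "Q M i j \<noteq> 0"
    have Qpos: "0 < Q M i j" using Qne nn[OF assms(3)] assms(4,5) by (metis less_eq_real_def)
    have dne: "delta p M i j \<noteq> 0" using assms(7) by (simp add: bounded_in_cycle_def)
    define s where "s = sgn (delta p M i j)"
    define g where "g k l = s * (P k * Q M k l - P l * Q M l k)" for k l
    define E where "E = {(k, l). k \<in> M \<and> l \<in> M \<and> 0 < g k l}"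
    have gflow: "g k l = (Q M k l + Q M l k) * (s * delta p M k l)" if "k \<in> M" "l \<in> M" for k l
      using flow[OF that] by (simp add: g_def)
    have gasym: "g l k = - g k l" for k l by (simp add: g_def algebra_simps)
    have gij: "0 < g i j"
    proof -
      have "s * delta p M i j = \<bar>delta p M i j\<bar>" by (simp add: s_def sgn_if abs_if)
      then have "0 < s * delta p M i j" using dne by simp
      moreover have "0 < Q M i j + Q M j i" using Qpos nn[OF assms(3)] assms(4,5) by (simp add: add_pos_nonneg)
      ultimately show ?thesis using gflow[OF assms(4,5)] by simp
    qed
    have Esign: "0 < s * delta p M k l" if "(k, l) \<in> E" for k l
    proof -
      have kl: "k \<in> M" "l \<in> M" "0 < g k l" using that by (auto simp: E_def)
      have "0 \<le> Q M k l + Q M l k" using nn[OF assms(3)] kl by (simp add: add_nonneg_nonneg)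
      then show ?thesis using kl(3) gflow[OF kl(1,2)] by (simp add: zero_less_mult_iff)
    qed
    define R where "R = {k. \<exists>xs. epath E xs \<and> hd xs = j \<and> last xs = k \<and> set xs \<subseteq> M}"
    have RM: "R \<subseteq> M" by (auto simp: R_def epath_def)
    have jR: "j \<in> R" unfolding R_def using assms(5) by (intro CollectI exI[of _ "[j]"]) (simp add: epath_def)
    have closed: "l \<in> R" if kR: "k \<in> R" and klE: "(k, l) \<in> E" for k l
    proof -
      obtain xs where xs: "epath E xs" "hd xs = j" "last xs = k" "set xs \<subseteq> M" using kR unfolding R_def by blast
      obtain ys where "epath E ys" "hd ys = hd xs" "last ys = l" "set ys \<subseteq> insert l (set xs)"
        using epath_extend[OF xs(1)] klE xs(3) by blast
      moreover have "l \<in> M" using klE by (simp add: E_def)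
      ultimately show ?thesis using xs unfolding R_def by blast
    qed
    have iR: "i \<in> R"
    proof (rule ccontr)
      assume iR: "i \<notin> R"
      have finR: "finite R" using RM finM finite_subset by blast
      have "(\<Sum>k\<in>R. \<Sum>l\<in>M. g k l) = 0"
      proof (rule sum.neutral, rule ballI)
        fix k assume "k \<in> R"
        then have "k \<in> M" using RM by auto
        have "(\<Sum>l\<in>M. g k l) = s * (\<Sum>l\<in>M. P k * Q M k l - P l * Q M l k)"
          by (simp add: g_def sum_distrib_left)
        then show "(\<Sum>l\<in>M. g k l) = 0" using cons[OF \<open>k \<in> M\<close>] by simp
      qed
      moreover have "(\<Sum>k\<in>R. \<Sum>l\<in>M. g k l) = (\<Sum>k\<in>R. \<Sum>l\<in>M - R. g k l) + (\<Sum>k\<in>R. \<Sum>l\<in>R. g k l)"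
        by (simp add: sum.subset_diff[OF RM finM] sum.distrib)
      moreover have "(\<Sum>k\<in>R. \<Sum>l\<in>R. g k l) = 0"
      proof -
        have "(\<Sum>k\<in>R. \<Sum>l\<in>R. g k l) = (\<Sum>l\<in>R. \<Sum>k\<in>R. g k l)" by (rule sum.swap)
        also have "\<dots> = (\<Sum>l\<in>R. \<Sum>k\<in>R. - g l k)"
          by (intro sum.cong refl) (metis gasym)
        also have "\<dots> = - (\<Sum>l\<in>R. \<Sum>k\<in>R. g l k)" by (simp add: sum_negf)
        finally show ?thesis by simp
      qed
      moreover have "(\<Sum>k\<in>R. \<Sum>l\<in>M - R. g k l) < 0"
      proof -
        have hp: "g k l \<le> 0" if kR: "k \<in> R" and l: "l \<in> M - R" for k l
        proof (rule ccontr)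
          assume "\<not> g k l \<le> 0"
          then have "(k, l) \<in> E" using l kR RM by (auto simp: E_def)
          then show False using closed[OF kR] l by auto
        qed
        have h: "(\<Sum>l\<in>M - R. g k l) \<le> 0" if "k \<in> R" for k
          using hp[OF that] by (intro sum_nonpos) auto
        have "(\<Sum>k\<in>R. \<Sum>l\<in>M - R. g k l) = (\<Sum>l\<in>M - R. g j l) + (\<Sum>k\<in>R - {j}. \<Sum>l\<in>M - R. g k l)"
          using sum.remove[OF finR jR] .
        also have "\<dots> \<le> (\<Sum>l\<in>M - R. g j l)" proof -
          have "(\<Sum>k\<in>R - {j}. \<Sum>l\<in>M - R. g k l) \<le> 0" by (rule sum_nonpos) (simp add: h)
          then show ?thesis by simp
        qed
        also have "(\<Sum>l\<in>M - R. g j l) = g j i + (\<Sum>l\<in>M - R - {i}. g j l)"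
          using sum.remove[of "M - R" i] finM iR assms(4) by simp
        also have "\<dots> \<le> g j i"
        proof -
          have "(\<Sum>l\<in>M - R - {i}. g j l) \<le> 0"
            using hp[OF jR] by (intro sum_nonpos) auto
          then show ?thesis by simp
        qed
        also have "\<dots> < 0" using gij gasym[of j i] by simp
        finally show ?thesis .
      qed
      ultimately show False by simp
    qed
    then obtain xs where xs: "epath E xs" "hd xs = j" "last xs = i" "set xs \<subseteq> M" unfolding R_def by blast
    have ne: "xs \<noteq> []" "distinct xs" using xs(1) by (auto simp: epath_def)
    define n where "n = length xs"
    have npos: "0 < n" using ne by (simp add: n_def)
    have last_n: "xs ! (n - 1) = i" using xs(3) ne by (simp add: last_conv_nth n_def)
    have hd_n: "xs ! 0 = j" using xs(2) ne by (simp add: hd_conv_nth)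
    have ijc: "(i, j) \<in> cycle_pairs xs"
      unfolding cycle_pairs_def using npos last_n hd_n
      by (intro CollectI exI[of _ "n - 1"]) (simp add: n_def)
    have allc: "0 < s * delta p M k l" if klc: "(k, l) \<in> cycle_pairs xs" for k l
    proof -
      obtain m where m: "m < n" "k = xs ! m" "l = xs ! ((m + 1) mod n)"
        using klc unfolding cycle_pairs_def n_def by auto
      show ?thesis
      proof (cases "Suc m < n")
        case True
        then have "(k, l) \<in> E" using m xs(1) by (simp add: epath_def n_def)
        then show ?thesis by (rule Esign)
      next
        case False
        then have "Suc m = n" using m(1) by auto
        then have "m = n - 1" "(m + 1) mod n = 0" by auto
        then have "k = i" "l = j" using m last_n hd_n by auto
        then show ?thesis using gij Esign[of i j] assms(4,5) by (simp add: E_def)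
      qed
    qed
    have "bounded_in_cycle p M i j"
      unfolding bounded_in_cycle_def
    proof (rule disjI2, intro exI[of _ xs] conjI)
      show "xs \<noteq> []" "distinct xs" "set xs \<subseteq> M" "(i, j) \<in> cycle_pairs xs" using ne xs ijc by auto
      show "(\<forall>(k, l)\<in>cycle_pairs xs. 0 < delta p M k l) \<or> (\<forall>(k, l)\<in>cycle_pairs xs. delta p M k l < 0)"
      proof (cases "0 < delta p M i j")
        case True
        then have "s = 1" by (simp add: s_def)
        then show ?thesis using allc by auto
      next
        case False
        then have "s = -1" using dne by (simp add: s_def sgn_if)
        then show ?thesis using allc by (auto simp: neg_less_0_iff_less)
      qed
    qed
    with assms(7) show False by simp
  qed
qed

end
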